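(* Let $G$ be a connected graph on $p\ge 6$ vertices that contains no copy of $T_6^1$. Then $e(G)\le 2p-3$.
   Context: All graphs are finite and simple; a graph "contains" $H$ if it has a subgraph isomorphic to $H$; $e(G)$ is the number of edges of $G$. $T_6^1$ is the tree on vertex set $\{v_0,\ldots,v_5\}$ with edges $v_0v_1,v_0v_2,v_0v_3,v_2v_4,v_3v_5$. *)

theory Defs
  imports Main
begin

definition simple_graph :: "'a set \<Rightarrow> 'a set set \<Rightarrow> bool" where
  "simple_graph V E \<longleftrightarrow> finite V \<and> (\<forall>e\<in>E. e \<subseteq> V \<and> card e = 2)"

definition adj :: "'a set set \<Rightarrow> 'a \<Rightarrow> 'a \<Rightarrow> bool" where
  "adj E u v \<longleftrightarrow> {u, v} \<in> E"

definition connected_graph :: "'a set \<Rightarrow> 'a set set \<Rightarrow> bool" where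
  "connected_graph V E \<longleftrightarrow> (\<forall>u\<in>V. \<forall>v\<in>V. (u, v) \<in> {(x, y). adj E x y}\<^sup>*)"

definition T61_edges :: "(nat \<times> nat) set" where
  "T61_edges = {(0,1), (0,2), (0,3), (2,4), (3,5)}"

definition contains_T61 :: "'a set \<Rightarrow> 'a set set \<Rightarrow> bool" where
  "contains_T61 V E \<longleftrightarrow> (\<exists>f. inj_on f {0..5} \<and> f ` {0..5} \<subseteq> V \<and>
      (\<forall>(i, j)\<in>T61_edges. {f i, f j} \<in> E))"

end

theory Submission
  imports Defs
begin


definition nbr :: "'a set set \<Rightarrow> 'a \<Rightarrow> 'a set" where
  "nbr E x = {y. {x,y} \<in> E}"

lemma sg_edge: assumes "simple_graph V E" "{x,y} \<in> E" shows "x \<noteq> y" "x \<in> V" "y \<in> V"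
  using assms unfolding simple_graph_def by (auto simp: card_insert_if split: if_splits)

lemma sg_edgeE: assumes "simple_graph V E" "e \<in> E"
  obtains x y where "e = {x,y}" "x \<noteq> y"
  using assms unfolding simple_graph_def by (meson card_2_iff)

lemma T_witness:
  assumes sg: "simple_graph V E"
  and e: "{c0,c} \<in> E" "{c0,a} \<in> E" "{c0,b} \<in> E" "{a,a'} \<in> E" "{b,b'} \<in> E"
  and d: "distinct [c0,c,a,b,a',b']"
  shows "contains_T61 V E"
proof -
  define f where "f = (\<lambda>i::nat. [c0,c,a,b,a',b'] ! i)"
  have s: "{0..5::nat} = {0,1,2,3,4,5}" by auto
  have inj: "inj_on f {0..5}"
    unfolding inj_on_def f_def using d by (auto simp: nth_eq_iff_index_eq)
  have im: "f ` {0..5} \<subseteq> V"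
    unfolding s f_def using sg_edge[OF sg e(1)] sg_edge[OF sg e(2)] sg_edge[OF sg e(3)]
       sg_edge[OF sg e(4)] sg_edge[OF sg e(5)] by auto
  have ed: "\<forall>(i, j)\<in>T61_edges. {f i, f j} \<in> E"
    unfolding T61_edges_def f_def using e by auto
  show ?thesis unfolding contains_T61_def using inj im ed by blast
qed



lemma sg_finE: "simple_graph V E \<Longrightarrow> finite E"
  unfolding simple_graph_def by (metis Pow_iff finite_Pow_iff rev_finite_subset subsetI)

lemma card_nbr: assumes sg: "simple_graph V E"
  shows "card (nbr E x) = card {e\<in>E. x\<in>e}"
proof -
  have "bij_betw (\<lambda>y. {x,y}) (nbr E x) {e\<in>E. x\<in>e}"
  proof (rule bij_betwI')
    fix y y' assume "y \<in> nbr E x" "y' \<in> nbr E x"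
    then show "({x,y} = {x,y'}) = (y = y')" using sg_edge[OF sg] unfolding nbr_def
      by (auto simp: doubleton_eq_iff)
  next
    fix y assume "y \<in> nbr E x" then show "{x,y} \<in> {e\<in>E. x\<in>e}" unfolding nbr_def by auto
  next
    fix e assume "e \<in> {e\<in>E. x\<in>e}"
    then obtain a b where "e = {a,b}" "e \<in> E" "x \<in> e" using sg_edgeE[OF sg] by blast
    then show "\<exists>y\<in>nbr E x. e = {x,y}" unfolding nbr_def by (auto simp: insert_commute)
  qed
  then show ?thesis by (rule bij_betw_same_card)
qed

lemma handshake: assumes sg: "simple_graph V E"
  shows "(\<Sum>x\<in>V. card (nbr E x)) = 2 * card E"
proof -
  have fV: "finite V" using sg unfolding simple_graph_def by auto
  have fE: "finite E" using sg_finE[OF sg] .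
  have "(\<Sum>x\<in>V. card (nbr E x)) = (\<Sum>x\<in>V. \<Sum>e\<in>E. if x \<in> e then 1 else 0)"
    by (rule sum.cong) (auto simp: card_nbr[OF sg] sum.inter_filter[OF fE, symmetric])
  also have "\<dots> = (\<Sum>e\<in>E. \<Sum>x\<in>V. if x \<in> e then 1 else 0)" by (rule sum.swap)
  also have "\<dots> = (\<Sum>e\<in>E. 2)"
  proof (rule sum.cong)
    fix e assume "e \<in> E"
    then have "e \<subseteq> V" "card e = 2" using sg unfolding simple_graph_def by auto
    then have "{x\<in>V. x\<in>e} = e" by auto
    then show "(\<Sum>x\<in>V. if x \<in> e then 1 else 0) = (2::nat)"
      using \<open>card e = 2\<close> by (simp add: sum.inter_filter[OF fV, symmetric])
  qed simp
  finally show ?thesis by simp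
qed

lemma closure:
  assumes c: "connected_graph V E" and v: "v \<in> V" "v \<in> S"
  and cl: "\<And>x y. x \<in> S \<Longrightarrow> {x,y} \<in> E \<Longrightarrow> y \<in> S"
  shows "V \<subseteq> S"
proof
  fix u assume "u \<in> V"
  then have "(v,u) \<in> {(x, y). adj E x y}\<^sup>*" using c v unfolding connected_graph_def by blast
  then show "u \<in> S"
    by (induction rule: rtrancl_induct) (auto simp: adj_def v cl)
qed

lemma star_bound:
  assumes sg: "simple_graph V E" and H: "H \<subseteq> E" "\<And>e. e \<in> H \<Longrightarrow> v \<notin> e \<and> z \<in> e"
  and z: "z \<noteq> v" "z \<in> V" "v \<in> V"
  shows "card H \<le> card V - 2"
proof -
  have fV: "finite V" using sg unfolding simple_graph_def by auto
  have "H \<subseteq> (\<lambda>y. {z,y}) ` (V - {v,z})"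
  proof
    fix e assume "e \<in> H"
    then obtain a b where ab: "e = {a,b}" "a \<noteq> b" "e \<in> E" using H sg_edgeE[OF sg] by blast
    have vz: "v \<notin> e" "z \<in> e" using H(2)[OF \<open>e\<in>H\<close>] by auto
    show "e \<in> (\<lambda>y. {z,y}) ` (V - {v,z})"
    proof (cases "z = a")
      case True
      then show ?thesis using ab vz sg_edge[OF sg, of a b] by (intro image_eqI[of _ _ b]) auto
    next
      case False
      then have "z = b" using ab vz by auto
      then show ?thesis using ab vz sg_edge[OF sg, of a b] by (intro image_eqI[of _ _ a]) auto
    qed
  qed
  then have "card H \<le> card (V - {v,z})" using fV surj_card_le by (metis finite_Diff card_image_le card_mono finite_imageI order_trans)
  also have "\<dots> = card V - 2" using z fV by (simp add: card_Diff_subset)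
  finally show ?thesis .
qed

lemma nbr_card_le: assumes sg: "simple_graph V E" "v \<in> V" shows "card (nbr E v) \<le> card V - 1"
proof -
  have fV: "finite V" using sg unfolding simple_graph_def by auto
  have "nbr E v \<subseteq> V - {v}" using sg_edge[OF sg(1)] unfolding nbr_def by auto
  then show ?thesis using fV assms(2) by (metis card_Diff_singleton card_mono finite_Diff)
qed



lemma contains_mono: assumes "contains_T61 V' E'" "V' \<subseteq> V" "E' \<subseteq> E" shows "contains_T61 V E"
proof -
  obtain f where f: "inj_on f {0..5}" "f ` {0..5} \<subseteq> V'" "\<forall>(i, j)\<in>T61_edges. {f i, f j} \<in> E'"
    using assms(1) unfolding contains_T61_def by blast
  have "\<forall>(i, j)\<in>T61_edges. {f i, f j} \<in> E" using f(3) assms(3) by auto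
  moreover have "f ` {0..5} \<subseteq> V" using f(2) assms(2) by auto
  ultimately show ?thesis unfolding contains_T61_def using f(1) by blast
qed

lemma leaf_del:
  assumes sg: "simple_graph V E" and c: "connected_graph V E" and l: "l \<in> V" and nl: "nbr E l = {v}"
  shows "simple_graph (V - {l}) {e\<in>E. l\<notin>e}" "connected_graph (V - {l}) {e\<in>E. l\<notin>e}"
    "card {e\<in>E. l\<notin>e} = card E - 1"
proof -
  show "simple_graph (V - {l}) {e\<in>E. l\<notin>e}" using sg unfolding simple_graph_def by auto
  have fE: "finite E" using sg_finE[OF sg] .
  have "card {e\<in>E. l\<in>e} = 1" using card_nbr[OF sg, of l] nl by simp
  moreover have "{e\<in>E. l\<notin>e} = E - {e\<in>E. l\<in>e}" by auto
  ultimately show "card {e\<in>E. l\<notin>e} = card E - 1" using fE by (simp add: card_Diff_subset)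
  have lv: "{l,v} \<in> E" using nl unfolding nbr_def by auto
  have nb: "\<And>x. {l,x} \<in> E \<Longrightarrow> x = v" using nl unfolding nbr_def by auto
  have vl: "v \<noteq> l" using sg_edge[OF sg lv] by auto
  let ?R = "{(x, y). adj E x y}" and ?R' = "{(x, y). adj {e\<in>E. l\<notin>e} x y}"
  have key: "(u, w) \<in> ?R\<^sup>* \<Longrightarrow> u \<noteq> l \<Longrightarrow> (u, if w = l then v else w) \<in> ?R'\<^sup>*" for u w
  proof (induction rule: rtrancl_induct)
    case base then show ?case by simp
  next
    case (step w x)
    have wx: "{w,x} \<in> E" using step(2) unfolding adj_def by auto
    have ih: "(u, if w = l then v else w) \<in> ?R'\<^sup>*" using step.IH step.prems by blast
    show ?case
    proof (cases "w = l")
      case True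
      then have "x = v" using nb wx by auto
      then show ?thesis using ih True vl by simp
    next
      case False
      note wl = False
      show ?thesis
      proof (cases "x = l")
        case True
        then have "w = v" using nb wx by (auto simp: insert_commute)
        then show ?thesis using ih True wl by simp
      next
        case False
        then have "(w, x) \<in> ?R'" using wx wl unfolding adj_def by auto
        then show ?thesis using ih wl False by (simp add: rtrancl_into_rtrancl)
      qed
    qed
  qed
  show "connected_graph (V - {l}) {e\<in>E. l\<notin>e}"
    unfolding connected_graph_def
  proof (intro ballI)
    fix u w assume "u \<in> V - {l}" "w \<in> V - {l}"
    then have "(u, w) \<in> ?R\<^sup>*" "u \<noteq> l" "w \<noteq> l" using c unfolding connected_graph_def by auto
    then have "(u, if w = l then v else w) \<in> ?R'\<^sup>*" using key by blast
    then show "(u, w) \<in> ?R'\<^sup>*" using \<open>w \<noteq> l\<close> by simp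
  qed
qed



lemma inter_class:
  assumes two: "\<And>e. e \<in> F \<Longrightarrow> \<exists>x y. x \<noteq> y \<and> e = {x,y}"
    and int: "\<And>e1 e2. e1 \<in> F \<Longrightarrow> e2 \<in> F \<Longrightarrow> e1 \<inter> e2 \<noteq> {}"
  shows "F = {} \<or> (\<exists>z. \<forall>e\<in>F. z \<in> e) \<or> (\<exists>a b c. a \<noteq> b \<and> a \<noteq> c \<and> b \<noteq> c \<and> F = {{a,b},{a,c},{b,c}})"
proof (cases "F = {}")
  case False
  then obtain e0 where e0: "e0 \<in> F" by blast
  then obtain a b where ab: "a \<noteq> b" "e0 = {a,b}" using two by blast
  show ?thesis
  proof (cases "\<forall>e\<in>F. a \<in> e")
    case True then show ?thesis by blast
  next
    case False
    then obtain e1 where e1: "e1 \<in> F" "a \<notin> e1" by blast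
    then have "b \<in> e1" using int[OF e0 e1(1)] ab by auto
    then obtain c where c: "e1 = {b,c}" "c \<noteq> b" using two[OF e1(1)] by (auto simp: doubleton_eq_iff)
    have ca: "c \<noteq> a" using c e1 by auto
    show ?thesis
    proof (cases "\<forall>e\<in>F. b \<in> e")
      case True then show ?thesis by blast
    next
      case False
      then obtain e2 where e2: "e2 \<in> F" "b \<notin> e2" by blast
      then have "a \<in> e2" using int[OF e0 e2(1)] ab by auto
      moreover have "c \<in> e2" using int[OF e1(1) e2(1)] c e2 by auto
      ultimately have e2': "e2 = {a,c}" using two[OF e2(1)] ca by auto
      have "F = {{a,b},{a,c},{b,c}}"
      proof
        show "F \<subseteq> {{a,b},{a,c},{b,c}}"
        proof
          fix e assume e: "e \<in> F"
          obtain x y where xy: "x \<noteq> y" "e = {x,y}" using two[OF e] by blast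
          have "e \<inter> {a,b} \<noteq> {}" "e \<inter> {b,c} \<noteq> {}" "e \<inter> {a,c} \<noteq> {}"
            using int[OF e e0] int[OF e e1(1)] int[OF e e2(1)] ab c e2' by auto
          then show "e \<in> {{a,b},{a,c},{b,c}}" using xy ab ca c(2)
            by (auto simp: insert_commute)
        qed
      next
        show "{{a,b},{a,c},{b,c}} \<subseteq> F" using e0 e1 e2 ab c e2' by auto
      qed
      then show ?thesis using ab ca c by blast
    qed
  qed
qed simp

lemma card3: "card {A,B,C} \<le> 3"
  by (simp add: card_insert_if)



lemma main:
  "card V = n \<Longrightarrow> simple_graph V E \<Longrightarrow> connected_graph V E \<Longrightarrow> 6 \<le> n
   \<Longrightarrow> \<not> contains_T61 V E \<Longrightarrow> card E \<le> 2 * n - 3"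
proof (induction n arbitrary: V E rule: less_induct)
  case (less n V E)
  note cV = less.prems(1) and sg = less.prems(2) and cg = less.prems(3) and n6 = less.prems(4)
    and nT = less.prems(5)
  have fV: "finite V" using sg unfolding simple_graph_def by auto
  have fE: "finite E" using sg_finE[OF sg] .
  have noT: False if "{c0,c}\<in>E" "{c0,a}\<in>E" "{c0,b}\<in>E" "{a,a'}\<in>E" "{b,b'}\<in>E"
      "distinct [c0,c,a,b,a',b']" for c0 c a b a' b'
    using T_witness[OF sg that] nT by blast
  have ne: "x \<noteq> y" "x \<in> V" "y \<in> V" if "{x,y} \<in> E" for x y using sg_edge[OF sg that] by auto
  show ?case
  proof (cases "\<forall>x\<in>V. card (nbr E x) \<le> 3")
    case True
    have "2 * card E = (\<Sum>x\<in>V. card (nbr E x))" using handshake[OF sg] by simp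
    also have "\<dots> \<le> (\<Sum>x\<in>V. 3)" using True by (intro sum_mono) auto
    also have "\<dots> = 3 * n" using cV by simp
    finally show ?thesis using n6 by linarith
  next
    case False
    then obtain v where v: "v \<in> V" "4 \<le> card (nbr E v)" by (auto simp: not_le)
    define N where "N = nbr E v"
    have Nv: "x \<in> N \<longleftrightarrow> {v,x} \<in> E" for x unfolding N_def nbr_def by simp
    have vN: "v \<notin> N" using ne Nv by blast
    have NV: "N \<subseteq> V" using ne Nv by blast
    have c4: "4 \<le> card N" using v N_def by simp
    have fN: "finite N" using NV fV finite_subset by blast
    define H where "H = {e\<in>E. v \<notin> e}"
    have cE: "card E = card N + card H"
    proof -
      have "E = {e\<in>E. v \<in> e} \<union> H" "{e\<in>E. v \<in> e} \<inter> H = {}" unfolding H_def by auto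
      then have "card E = card {e\<in>E. v \<in> e} + card H" using fE
        by (metis (no_types, lifting) card_Un_disjoint finite_Un)
      then show ?thesis using card_nbr[OF sg, of v] N_def by simp
    qed
    have cN: "card N \<le> n - 1" using nbr_card_le[OF sg v(1)] N_def cV by simp
    have goalH: "card H \<le> n - 2 \<Longrightarrow> card E \<le> 2 * n - 3" using cE cN n6 by linarith
    have bigN: "\<exists>b\<in>N. b \<notin> X" if "card X \<le> 3" "finite X" for X
    proof (rule ccontr)
      assume "\<not> ?thesis" then have "N \<subseteq> X" by auto
      then have "card N \<le> card X" using that card_mono by blast
      then show False using c4 that by linarith
    qed
    have b2: "\<exists>b\<in>N. b \<noteq> x \<and> b \<noteq> y" for x y
      using bigN[of "{x,y}"] by (auto simp: card_insert_if)
    define F where "F = {e\<in>H. e \<inter> N \<noteq> {}}"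
    have edgeN: "\<exists>a a'. e = {a,a'} \<and> a \<in> N \<and> a \<noteq> a' \<and> a' \<noteq> v" if "e \<in> F" for e
    proof -
      from that have "e \<in> E" "v \<notin> e" "e \<inter> N \<noteq> {}" unfolding F_def H_def by auto
      then obtain x y where "e = {x,y}" "x \<noteq> y" using sg_edgeE[OF sg] by blast
      then show ?thesis using \<open>v \<notin> e\<close> \<open>e \<inter> N \<noteq> {}\<close>
        by (metis (no_types, lifting) disjoint_iff insert_commute insertCI insertE singletonD)
    qed
    have inF: "{x,y} \<in> F" if "{x,y} \<in> E" "x \<in> N" "y \<noteq> v" for x y
      using that vN unfolding F_def H_def by auto
    have inter: "e1 \<inter> e2 \<noteq> {}" if e1F: "e1 \<in> F" and e2F: "e2 \<in> F" for e1 e2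
    proof
      assume dis: "e1 \<inter> e2 = {}"
      obtain a a' where a: "e1 = {a,a'}" "a \<in> N" "a \<noteq> a'" "a' \<noteq> v" using edgeN[OF e1F] by blast
      obtain b b' where b: "e2 = {b,b'}" "b \<in> N" "b \<noteq> b'" "b' \<noteq> v" using edgeN[OF e2F] by blast
      have eE: "{a,a'} \<in> E" "{b,b'} \<in> E" using e1F e2F a b unfolding F_def H_def by auto
      have d: "a \<noteq> b" "a \<noteq> b'" "a' \<noteq> b" "a' \<noteq> b'" using dis a b by auto
      have av: "a \<noteq> v" "b \<noteq> v" using a b vN by auto
      show False
      proof (cases "\<exists>c\<in>N. c \<notin> {a,b,a',b'}")
        case True
        then obtain c where c: "c \<in> N" "c \<notin> {a,b,a',b'}" by blast
        show False
          by (rule noT[of v c a b a' b']) (use c a b eE d av vN Nv in auto)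
      next
        case False
        then have Nsub: "N \<subseteq> {a,b,a',b'}" by auto
        have a'N: "a' \<in> N"
        proof (rule ccontr)
          assume "a' \<notin> N"
          then have "N \<subseteq> {a,b,b'}" using Nsub by auto
          then have "card N \<le> card {a,b,b'}" by (intro card_mono) auto
          then have "card N \<le> 3" using card3[of a b b'] by linarith
          then show False using c4 by simp
        qed
        have b'N: "b' \<in> N"
        proof (rule ccontr)
          assume "b' \<notin> N"
          then have "N \<subseteq> {a,b,a'}" using Nsub by auto
          then have "card N \<le> card {a,b,a'}" by (intro card_mono) auto
          then have "card N \<le> 3" using card3[of a b a'] by linarith
          then show False using c4 by simp
        qed
        have "V \<subseteq> insert v N"
        proof (rule closure[OF cg v(1)])
          show "v \<in> insert v N" by simp
        next
          fix x y assume x: "x \<in> insert v N" and xy: "{x,y} \<in> E"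
          show "y \<in> insert v N"
          proof (rule ccontr)
            assume y: "y \<notin> insert v N"
            have "x \<in> N" using x y xy Nv by auto
            then have "x = a \<or> x = a' \<or> x = b \<or> x = b'" using Nsub by auto
            then show False
            proof (elim disjE)
              assume "x = a" then show False
                by (intro noT[of v a' a b y b']) (use xy y a b eE d av vN Nv a'N b'N in auto)
            next
              assume "x = a'" then show False
                by (intro noT[of v a a' b y b']) (use xy y a b eE d av vN Nv a'N b'N in \<open>auto simp: insert_commute\<close>)
            next
              assume "x = b" then show False
                by (intro noT[of v b' b a y a']) (use xy y a b eE d av vN Nv a'N b'N in auto)
            next
              assume "x = b'" then show False
                by (intro noT[of v b b' a y a']) (use xy y a b eE d av vN Nv a'N b'N in \<open>auto simp: insert_commute\<close>)
            qed
          qed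
        qed
        then have "card V \<le> card (insert v N)" using fN by (intro card_mono) auto
        also have "\<dots> \<le> card N + 1" using fN by (simp add: card_insert_if)
        also have "card N \<le> card {a,b,a',b'}" using Nsub by (intro card_mono) auto
        also have "card {a,b,a',b'} \<le> 4" by (simp add: card_insert_if)
        finally show False using cV n6 by simp
      qed
    qed
    have twoF: "\<exists>x y. x \<noteq> y \<and> e = {x,y}" if "e \<in> F" for e
      using edgeN[OF that] by blast
    have Fsub: "F \<subseteq> E" "\<And>e. e \<in> F \<Longrightarrow> v \<notin> e" unfolding F_def H_def by auto
    have FN: "\<And>e. e \<in> F \<Longrightarrow> e \<inter> N \<noteq> {}" unfolding F_def by auto
    have Hsub: "H \<subseteq> E" "\<And>e. e \<in> H \<Longrightarrow> v \<notin> e" unfolding H_def by auto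
    have SN: "card E \<le> 2 * n - 3" if zN: "z \<in> N" and zF: "\<forall>e\<in>F. z \<in> e" for z
    proof -
      have zv: "z \<noteq> v" using zN vN by auto
      have zV: "z \<in> V" using zN NV by auto
      have zvE: "{z,v} \<in> E" using zN Nv by (simp add: insert_commute)
      have f1: "y = v \<or> y = z" if "x \<in> N" "x \<noteq> z" "{x,y} \<in> E" for x y
      proof (cases "y = v")
        case False
        then have "{x,y} \<in> F" using inF that by blast
        then show ?thesis using zF that by auto
      qed simp
      have f2: "s \<notin> N \<and> s \<noteq> v" if "r \<notin> N" "r \<noteq> v" "{r,s} \<in> E" "s \<noteq> z" for r s
      proof
        show "s \<noteq> v" using that Nv by (auto simp: insert_commute)
        show "s \<notin> N"
        proof
          assume "s \<in> N"
          then have "{s,r} \<in> F" using inF[of s r] that by (auto simp: insert_commute)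
          then show False using zF that zN by auto
        qed
      qed
      have K: "y \<in> {v,r,s}" if r: "r \<notin> N" "r \<noteq> v" "{z,r} \<in> E" "{r,s} \<in> E" "s \<noteq> z"
        and y: "{z,y} \<in> E" for r s y
      proof (rule ccontr)
        assume yn: "y \<notin> {v,r,s}"
        obtain \<beta> where \<beta>: "\<beta> \<in> N" "\<beta> \<noteq> z" "\<beta> \<noteq> y" using b2[of z y] by blast
        have sNv: "s \<notin> N" "s \<noteq> v" using f2[OF r(1,2,4,5)] by auto
        show False
          by (rule noT[of z y r v s \<beta>]) (use r y yn \<beta> sNv zvE zN Nv ne in \<open>auto simp: insert_commute\<close>)
      qed
      show ?thesis
      proof (cases "\<forall>r s. r \<notin> N \<and> r \<noteq> v \<and> {z,r} \<in> E \<and> {r,s} \<in> E \<longrightarrow> s = z")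
        case True
        have VS: "V \<subseteq> insert v (N \<union> nbr E z)"
        proof (rule closure[OF cg v(1)])
          show "v \<in> insert v (N \<union> nbr E z)" by simp
        next
          fix x y assume x: "x \<in> insert v (N \<union> nbr E z)" and xy: "{x,y} \<in> E"
          show "y \<in> insert v (N \<union> nbr E z)"
          proof (cases "x = v")
            case True then show ?thesis using xy Nv by auto
          next
            case xv: False
            show ?thesis
            proof (cases "x \<in> N")
              case True
              then show ?thesis using f1[OF True _ xy] xy zN unfolding nbr_def by auto
            next
              case False
              then have "{z,x} \<in> E" using x xv unfolding nbr_def by auto
              then have "y = z" using True False xv xy by blast
              then show ?thesis using zN by auto
            qed
          qed
        qed
        have "card H \<le> card V - 2"
        proof (rule star_bound[OF sg Hsub(1) _ zv zV v(1)])
          fix e assume e: "e \<in> H"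
          then obtain x y where xy: "e = {x,y}" "x \<noteq> y" "e \<in> E" using Hsub sg_edgeE[OF sg] by blast
          have vxy: "x \<noteq> v" "y \<noteq> v" using Hsub(2)[OF e] xy by auto
          have "z \<in> e"
          proof (cases "x \<in> N \<or> y \<in> N")
            case True
            then have "e \<in> F" using inF[of x y] inF[of y x] xy vxy by (auto simp: insert_commute)
            then show ?thesis using zF by auto
          next
            case False
            then have "x \<in> nbr E z" using VS xy ne[of x y] vxy by auto
            then have "y = z" using True False vxy xy unfolding nbr_def by blast
            then show ?thesis using xy by auto
          qed
          then show "v \<notin> e \<and> z \<in> e" using Hsub(2)[OF e] by auto
        qed
        then show ?thesis using goalH cV by simp
      next
        case False
        then obtain r s where rs: "r \<notin> N" "r \<noteq> v" "{z,r} \<in> E" "{r,s} \<in> E" "s \<noteq> z" by blast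
        have sNv: "s \<notin> N" "s \<noteq> v" using f2[OF rs(1,2,4,5)] by auto
        have rsd: "r \<noteq> s" using ne rs by blast
        have nz: "y \<in> {v,r,s}" if "{z,y} \<in> E" for y using K[OF rs that] .
        show ?thesis
        proof (cases "{z,s} \<in> E")
          case True
          have nr: "t \<in> {z,s}" if "{r,t} \<in> E" for t
          proof (rule ccontr)
            assume "t \<notin> {z,s}"
            then have "s \<in> {v,r,t}" using K[OF rs(1,2,3) that] True by auto
            then show False using sNv rsd \<open>t \<notin> {z,s}\<close> by auto
          qed
          have ns: "t \<in> {z,r}" if "{s,t} \<in> E" for t
          proof (rule ccontr)
            assume "t \<notin> {z,r}"
            then have "r \<in> {v,s,t}" using K[OF sNv(1,2) True that] rs(3) by auto
            then show False using rs rsd \<open>t \<notin> {z,r}\<close> by auto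
          qed
          have VS: "V \<subseteq> insert v (N \<union> {r,s})"
          proof (rule closure[OF cg v(1)])
            show "v \<in> insert v (N \<union> {r,s})" by simp
          next
            fix x y assume x: "x \<in> insert v (N \<union> {r,s})" and xy: "{x,y} \<in> E"
            show "y \<in> insert v (N \<union> {r,s})"
            proof -
              have "x = v \<or> (x \<in> N \<and> x \<noteq> z) \<or> x = z \<or> x = r \<or> x = s" using x by auto
              then show ?thesis
                using xy Nv f1[of x y] nz[of y] nr[of y] ns[of y] zN by auto
            qed
          qed
          have "H \<subseteq> {{z,r},{z,s},{r,s}}"
          proof
            fix e assume e: "e \<in> H"
            then obtain x y where xy: "e = {x,y}" "x \<noteq> y" "e \<in> E" using Hsub sg_edgeE[OF sg] by blast
            have vxy: "x \<noteq> v" "y \<noteq> v" using Hsub(2)[OF e] xy by auto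
            have xV: "x \<in> V" "y \<in> V" using ne xy by auto
            have zx: "x \<noteq> z \<Longrightarrow> x \<in> N \<Longrightarrow> False" 
            proof -
              assume "x \<noteq> z" "x \<in> N"
              then have "y = z" using f1[of x y] xy vxy by auto
              then have "x \<in> {v,r,s}" using nz[of x] xy by (auto simp: insert_commute)
              then show False using \<open>x \<in> N\<close> rs sNv vN by auto
            qed
            have zy: "y \<noteq> z \<Longrightarrow> y \<in> N \<Longrightarrow> False" 
            proof -
              assume "y \<noteq> z" "y \<in> N"
              then have "x = z" using f1[of y x] xy vxy by (auto simp: insert_commute)
              then have "y \<in> {v,r,s}" using nz[of y] xy by auto
              then show False using \<open>y \<in> N\<close> rs sNv vN by auto
            qed
            have "x \<in> {z,r,s}" "y \<in> {z,r,s}" using VS xV vxy zx zy zN by auto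
            then show "e \<in> {{z,r},{z,s},{r,s}}" using xy by (auto simp: insert_commute)
          qed
          then have "card H \<le> 3" using card3 card_mono by (metis finite.emptyI finite.insertI order_trans)
          then show ?thesis using goalH n6 by simp
        next
          case False
          have nz2: "y \<in> {v,r}" if "{z,y} \<in> E" for y using nz[OF that] that False by auto
          obtain l where l: "l \<in> N" "l \<noteq> z" using b2[of z z] by blast
          have nl: "nbr E l = {v}"
          proof
            show "nbr E l \<subseteq> {v}"
            proof
              fix y assume "y \<in> nbr E l"
              then have ly: "{l,y} \<in> E" unfolding nbr_def by auto
              then have "y = v \<or> y = z" using f1 l by auto
              moreover have "y \<noteq> z"
              proof
                assume "y = z"
                then have "l \<in> {v,r}" using nz2[of l] ly by (auto simp: insert_commute)
                then show False using l rs vN by auto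
              qed
              ultimately show "y \<in> {v}" by auto
            qed
            show "{v} \<subseteq> nbr E l" using l Nv unfolding nbr_def by (auto simp: insert_commute)
          qed
          have lV: "l \<in> V" using l NV by auto
          have "insert v (N \<union> {r,s}) \<subseteq> V" using v NV ne rs by auto
          then have "card (insert v (N \<union> {r,s})) \<le> n" using fV cV card_mono by metis
          moreover have "card (insert v (N \<union> {r,s})) = card N + 3"
            using fN vN rs sNv rsd by (simp add: card_insert_if)
          ultimately have n7: "7 \<le> n" using c4 by linarith
          define E' where "E' = {e\<in>E. l \<notin> e}"
          have cV': "card (V - {l}) = n - 1" using cV lV fV by simp
          have sg': "simple_graph (V - {l}) E'" and cg': "connected_graph (V - {l}) E'"
            and cE': "card E' = card E - 1" using leaf_del[OF sg cg lV nl] unfolding E'_def by auto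
          have nT': "\<not> contains_T61 (V - {l}) E'"
            using nT contains_mono[of "V - {l}" E' V E] unfolding E'_def by auto
          have "card E' \<le> 2 * (n - 1) - 3"
            using less.IH[OF _ cV' sg' cg' _ nT'] n7 by simp
          moreover have "card E \<ge> 1" using l Nv fE by (metis card_0_eq empty_iff less_one not_le)
          ultimately show ?thesis using cE' n7 by linarith
        qed
      qed
    qed
    have cls: "F = {} \<or> (\<exists>z. \<forall>e\<in>F. z \<in> e) \<or> (\<exists>a b c. a \<noteq> b \<and> a \<noteq> c \<and> b \<noteq> c \<and> F = {{a,b},{a,c},{b,c}})"
      using inter_class[of F] twoF inter by blast
    show ?thesis
    proof (cases "F = {}")
      case True
      have VS: "V \<subseteq> insert v N"
      proof (rule closure[OF cg v(1)])
        show "v \<in> insert v N" by simp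
      next
        fix x y assume x: "x \<in> insert v N" and xy: "{x,y} \<in> E"
        show "y \<in> insert v N"
        proof (cases "x = v")
          case True then show ?thesis using xy Nv by auto
        next
          case False
          then have "x \<in> N" using x by auto
          then show ?thesis using inF[OF xy] True by (cases "y = v") auto
        qed
      qed
      have "H = {}"
      proof (rule ccontr)
        assume "H \<noteq> {}"
        then obtain e where e: "e \<in> H" by blast
        then obtain x y where xy: "e = {x,y}" "x \<noteq> y" "e \<in> E" using Hsub sg_edgeE[OF sg] by blast
        have vxy: "x \<noteq> v" "y \<noteq> v" using Hsub(2)[OF e] xy by auto
        then have "x \<in> N" using VS ne[of x y] xy by auto
        then show False using inF[of x y] xy vxy True by auto
      qed
      then show ?thesis using goalH n6 by simp
    next
      case Fne: False
      show ?thesis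
      proof (cases "\<exists>z. \<forall>e\<in>F. z \<in> e")
        case True
        then obtain z where zF: "\<forall>e\<in>F. z \<in> e" by blast
        obtain e0 where e0: "e0 \<in> F" using Fne by blast
        have zv: "z \<noteq> v" "z \<in> V" using zF e0 Fsub ne sg_edgeE[OF sg] by (metis insertE singletonD subsetD)+
        show ?thesis
        proof (cases "z \<in> N")
          case True then show ?thesis using SN zF by blast
        next
          case zN: False
          show ?thesis
          proof (cases "\<exists>x1 x2. x1 \<in> N \<and> x2 \<in> N \<and> x1 \<noteq> x2 \<and> {z,x1} \<in> E \<and> {z,x2} \<in> E")
            case True
            then obtain x1 x2 where x: "x1 \<in> N" "x2 \<in> N" "x1 \<noteq> x2" "{z,x1} \<in> E" "{z,x2} \<in> E" by blast
            have L: False if s: "{z,s} \<in> E" "s \<notin> N" "s \<noteq> v" "{s,t} \<in> E" "t \<noteq> z" for s t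
            proof -
              have tN: "t \<notin> N"
              proof
                assume "t \<in> N"
                then have "{t,s} \<in> F" using inF[of t s] s by (auto simp: insert_commute)
                then show False using zF s ne[of z s] by auto
              qed
              have tv: "t \<noteq> v" using s Nv by (auto simp: insert_commute)
              show False
                by (rule noT[of z x2 s x1 t v]) (use s x tN tv zN Nv ne in \<open>auto simp: insert_commute\<close>)
            qed
            have VS: "V \<subseteq> insert v (N \<union> insert z (nbr E z))"
            proof (rule closure[OF cg v(1)])
              show "v \<in> insert v (N \<union> insert z (nbr E z))" by simp
            next
              fix x y assume x: "x \<in> insert v (N \<union> insert z (nbr E z))" and xy: "{x,y} \<in> E"
              show "y \<in> insert v (N \<union> insert z (nbr E z))"
              proof -
                consider "x = v" | "x \<in> N" | "x = z" | "x \<in> nbr E z" "x \<notin> N" "x \<noteq> v" using x by auto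
                then show ?thesis
                proof cases
                  case 1 then show ?thesis using xy Nv by auto
                next
                  case 2
                  show ?thesis
                  proof (cases "y = v \<or> y \<in> N")
                    case False
                    then have "{x,y} \<in> F" using inF[OF xy 2] by auto
                    then show ?thesis using zF 2 zN by auto
                  qed auto
                next
                  case 3 then show ?thesis using xy unfolding nbr_def by auto
                next
                  case 4
                  then have "y = z" using L[of x y] xy unfolding nbr_def by blast
                  then show ?thesis by auto
                qed
              qed
            qed
            have "card H \<le> card V - 2"
            proof (rule star_bound[OF sg Hsub(1) _ zv(1) zv(2) v(1)])
              fix e assume e: "e \<in> H"
              then obtain x y where xy: "e = {x,y}" "x \<noteq> y" "e \<in> E" using Hsub sg_edgeE[OF sg] by blast
              have vxy: "x \<noteq> v" "y \<noteq> v" using Hsub(2)[OF e] xy by auto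
              have "z \<in> e"
              proof (cases "x \<in> N \<or> y \<in> N")
                case True
                then have "e \<in> F" using inF[of x y] inF[of y x] xy vxy by (auto simp: insert_commute)
                then show ?thesis using zF by auto
              next
                case False
                show ?thesis
                proof (rule ccontr)
                  assume "z \<notin> e"
                  then have "x \<in> nbr E z" using VS xy ne[of x y] vxy False by auto
                  then show False using L[of x y] xy False vxy \<open>z \<notin> e\<close> unfolding nbr_def by auto
                qed
              qed
              then show "v \<notin> e \<and> z \<in> e" using Hsub(2)[OF e] by auto
            qed
            then show ?thesis using goalH cV by simp
          next
            case False
            obtain x0 where x0: "x0 \<in> N" "x0 \<in> e0" using e0 unfolding F_def by auto
            have ze0: "z \<in> e0" using zF e0 by auto
            have e0z: "e0 = {z,x0}" using edgeN[OF e0] x0 ze0 zN by auto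
            have "\<forall>e\<in>F. x0 \<in> e"
            proof
              fix e assume e: "e \<in> F"
              obtain w where w: "w \<in> N" "w \<in> e" using e unfolding F_def by auto
              have "z \<in> e" using zF e by auto
              then have ez: "e = {z,w}" using edgeN[OF e] w zN by auto
              have "{z,w} \<in> E" "{z,x0} \<in> E" using e e0 ez e0z Fsub by auto
              then have "w = x0" using False w x0 by blast
              then show "x0 \<in> e" using w by simp
            qed
            then show ?thesis using SN x0 by blast
          qed
        qed
      next
        case False
        then obtain a b c where abc: "a \<noteq> b" "a \<noteq> c" "b \<noteq> c" "F = {{a,b},{a,c},{b,c}}"
          using cls Fne by blast
        have tE: "{a,b} \<in> E" "{a,c} \<in> E" "{b,c} \<in> E" using abc Fsub by auto
        have tv: "a \<noteq> v" "b \<noteq> v" "c \<noteq> v" using abc Fsub(2) by auto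
        have tN: "{a,b} \<inter> N \<noteq> {}" "{a,c} \<inter> N \<noteq> {}" "{b,c} \<inter> N \<noteq> {}"
          using abc(4) FN by auto
        have TL: False if "p \<in> N" "q \<in> N" "r \<notin> N" "{p,q} \<in> E" "{p,r} \<in> E" "{q,r} \<in> E" "r \<noteq> v"
          "{r,y} \<in> E" "y \<notin> N" "y \<noteq> v" "y \<notin> {p,q,r}" for p q r y
        proof -
          obtain \<beta> where \<beta>: "\<beta> \<in> N" "\<beta> \<noteq> p" "\<beta> \<noteq> q" using b2[of p q] by blast
          show False
            by (rule noT[of p q v r \<beta> y]) (use that \<beta> vN Nv ne in \<open>auto simp: insert_commute\<close>)
        qed
        have VS: "V \<subseteq> insert v (N \<union> {a,b,c})"
        proof (rule closure[OF cg v(1)])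
          show "v \<in> insert v (N \<union> {a,b,c})" by simp
        next
          fix x y assume x: "x \<in> insert v (N \<union> {a,b,c})" and xy: "{x,y} \<in> E"
          show "y \<in> insert v (N \<union> {a,b,c})"
          proof (rule ccontr)
            assume y: "y \<notin> insert v (N \<union> {a,b,c})"
            consider "x = v" | "x \<in> N" | "x \<in> {a,b,c}" "x \<notin> N" "x \<noteq> v" using x by auto
            then show False
            proof cases
              case 1 then show False using xy y Nv by auto
            next
              case 2
              then have "{x,y} \<in> F" using inF[OF xy 2] y by auto
              then show False using abc y by (auto simp: doubleton_eq_iff)
            next
              case 3
              note x3 = this
              then consider "x = a" | "x = b" | "x = c" by auto
              then show False
              proof cases
                case 1
                then have "b \<in> N" "c \<in> N" using tN x3 by auto
                then show False using TL[of b c a y] 1 x3 tE xy y abc by (auto simp: insert_commute)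
              next
                case 2
                then have "a \<in> N" "c \<in> N" using tN x3 by auto
                then show False using TL[of a c b y] 2 x3 tE xy y abc by (auto simp: insert_commute)
              next
                case 3
                then have "a \<in> N" "b \<in> N" using tN x3 by auto
                then show False using TL[of a b c y] 3 x3 tE xy y abc by (auto simp: insert_commute)
              qed
            qed
          qed
        qed
        have "H \<subseteq> F"
        proof
          fix e assume e: "e \<in> H"
          then obtain x y where xy: "e = {x,y}" "x \<noteq> y" "e \<in> E" using Hsub sg_edgeE[OF sg] by blast
          have vxy: "x \<noteq> v" "y \<noteq> v" using Hsub(2)[OF e] xy by auto
          show "e \<in> F"
          proof (cases "x \<in> N \<or> y \<in> N")
            case True
            then show ?thesis using inF[of x y] inF[of y x] xy vxy by (auto simp: insert_commute)
          next
            case False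
            then have "x \<in> {a,b,c}" "y \<in> {a,b,c}" using VS xy ne[of x y] vxy by auto
            then have "e \<in> {{a,b},{a,c},{b,c}}" using xy by (auto simp: insert_commute)
            then have "e \<inter> N \<noteq> {}" using abc(4) FN by auto
            then show ?thesis using False xy by auto
          qed
        qed
        then have "card H \<le> card F" using abc by (intro card_mono) auto
        also have "card F \<le> 3" using abc(4) card3 by simp
        finally have "card H \<le> 3" .
        then show ?thesis using goalH n6 by simp
      qed
    qed
  qed
qed


theorem lemma2p4:
  fixes V :: "'a set" and E :: "'a set set"
  assumes "simple_graph V E"
    and "connected_graph V E"
    and "card V \<ge> 6"
    and "\<not> contains_T61 V E"
  shows "card E \<le> 2 * card V - 3"
  using main[OF refl assms(1,2) assms(3) assms(4)] .

end
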